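(* Let $p,r\in[0,1]$. Let $B_1,\dots,B_k$ be barriers, let $U=\bigcup_{i=1}^k int(B_i)$ and $V=\bigcap_{i=1}^k ext(B_i)$ (with $k,l,m,n\ge 0$ integers). Let $e_1,\dots,e_l$ be edges in $U$ with prescribed states $s_1,\dots,s_l\in\{0,1\}$, let $u_1,\dots,u_m$ be vertices in $U$ with prescribed colours $c_1,\dots,c_m\in\{0,1\}$, let $v_1,\dots,v_n$ be vertices in $V$ and let $\kappa\in\{0,1\}$. Let $I$ be the event that all edges of $B_1,\dots,B_k$ are closed, $Y(e_i)=s_i$ for all $i$, $X(u_j)=c_j$ for all $j$, and $X(v_1)=\dots=X(v_n)=\kappa$, and suppose $\mathbb{P}_{p,r}(I)>0$. Then the conditional distribution under $\mathbb{P}_{p,r}(\cdot\mid I)$ of the states of the edges in $V$ stochastically dominates the product Bernoulli($p$) measure $\nu_p$ on these edges.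
   Context: DaC model on the square lattice: $\mathbb{Z}^2$ with nearest-neighbour edge set $\mathcal{E}^2$; $Y\in\{0,1\}^{\mathcal{E}^2}$ i.i.d. Bernoulli($p$) edge states (1 = open), law $\nu_p$; $p$-clusters are connected components of the open-edge graph; each $p$-cluster independently coloured black (1) with probability $r$, white (0) with probability $1-r$, giving $X\in\{0,1\}^{\mathbb{Z}^2}$; $\mathbb{P}_{p,r}$ is the joint law. A barrier is a finite edge set $E$ whose removal (keeping end-vertices) splits $(\mathbb{Z}^2,\mathcal{E}^2)$ into two or more connected subgraphs, exactly one of which is infinite; $ext(E)$ is the infinite component and $int(E)$ is the union of the finite components. "Edges in $U$" / "edges in $V$" are edges of the corresponding subgraphs (both endpoints in the set, edge not in any $B_i$). A barrier is closed if all its edges are closed. *)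

theory Defs
  imports "HOL-Probability.Probability" "HOL-Library.Countable"
begin

type_synonym vertex = "int \<times> int"
type_synonym edge = "vertex \<times> vertex"

text \<open>Each nearest-neighbour edge is represented once, oriented from a vertex
  to its right or upper neighbour.\<close>
definition E2 :: "edge set" where
  "E2 = {(a, b). b = (fst a + 1, snd a) \<or> b = (fst a, snd a + 1)}"

definition adj :: "edge set \<Rightarrow> vertex rel" where
  "adj F = {(a, b). (a, b) \<in> F \<or> (b, a) \<in> F}"

definition component :: "edge set \<Rightarrow> vertex \<Rightarrow> vertex set" where
  "component F x = {y. (x, y) \<in> (adj F)\<^sup>*}"

definition components :: "edge set \<Rightarrow> vertex set set" where
  "components F = range (component F)"

definition barrier :: "edge set \<Rightarrow> bool" where
  "barrier E \<longleftrightarrow> finite E \<and> E \<subseteq> E2 \<and>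
     (\<exists>C D. C \<in> components (E2 - E) \<and> D \<in> components (E2 - E) \<and> C \<noteq> D) \<and>
     (\<exists>!C. C \<in> components (E2 - E) \<and> infinite C)"

definition extB :: "edge set \<Rightarrow> vertex set" where
  "extB E = (THE C. C \<in> components (E2 - E) \<and> infinite C)"

definition intB :: "edge set \<Rightarrow> vertex set" where
  "intB E = \<Union>{C \<in> components (E2 - E). finite C}"

text \<open>Bernoulli measure on bool (True = open / black).\<close>
definition bern :: "real \<Rightarrow> bool measure" where
  "bern q = measure_pmf (bernoulli_pmf q)"

definition nu :: "real \<Rightarrow> edge set \<Rightarrow> (edge \<Rightarrow> bool) measure" where
  "nu p S = PiM S (\<lambda>_. bern p)"

definition cluster :: "(edge \<Rightarrow> bool) \<Rightarrow> vertex \<Rightarrow> vertex set" where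
  "cluster Y v = component {e \<in> E2. Y e} v"

definition rep :: "vertex set \<Rightarrow> vertex" where
  "rep C = from_nat (LEAST n. n \<in> to_nat ` C)"

text \<open>Sample space: edge states (iid Bernoulli p) and auxiliary vertex colours
  (iid Bernoulli r); each cluster receives the auxiliary colour of its
  representative, so distinct clusters are independently coloured black with
  probability r. This realises the joint law P_{p,r} of (Y, X).\<close>
definition DaC :: "real \<Rightarrow> real \<Rightarrow> ((edge \<Rightarrow> bool) \<times> (vertex \<Rightarrow> bool)) measure" where
  "DaC p r = pair_measure (PiM E2 (\<lambda>_. bern p)) (PiM UNIV (\<lambda>_. bern r))"

definition Ystate :: "(edge \<Rightarrow> bool) \<times> (vertex \<Rightarrow> bool) \<Rightarrow> edge \<Rightarrow> bool" where
  "Ystate \<omega> e = fst \<omega> e"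

definition Xcol :: "(edge \<Rightarrow> bool) \<times> (vertex \<Rightarrow> bool) \<Rightarrow> vertex \<Rightarrow> bool" where
  "Xcol \<omega> v = snd \<omega> (rep (cluster (fst \<omega>) v))"

definition increasing_event :: "'i set \<Rightarrow> ('i \<Rightarrow> bool) set \<Rightarrow> bool" where
  "increasing_event S A \<longleftrightarrow>
     (\<forall>x\<in>A. \<forall>y\<in>(S \<rightarrow>\<^sub>E UNIV). (\<forall>i\<in>S. x i \<longrightarrow> y i) \<longrightarrow> y \<in> A)"

definition stoch_dom :: "'i set \<Rightarrow> ('i \<Rightarrow> bool) measure \<Rightarrow> ('i \<Rightarrow> bool) measure \<Rightarrow> bool" where
  "stoch_dom S mu nu' \<longleftrightarrow>
     (\<forall>A \<in> sets (PiM S (\<lambda>_. count_space (UNIV :: bool set))).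
        increasing_event S A \<longrightarrow> measure nu' A \<le> measure mu A)"

end

theory Submission
  imports Defs
begin

lemma distr_merge_PiM_inf:
  assumes M: "\<And>i. i \<in> I \<union> J \<Longrightarrow> prob_space (M i)" and IJ: "I \<inter> J = {}"
  shows "distr (PiM I M \<Otimes>\<^sub>M PiM J M) (PiM (I \<union> J) M) (merge I J) = PiM (I \<union> J) M"
proof (rule measure_eqI_PiM_infinite[symmetric, OF refl])
  interpret PI: prob_space "PiM I M" using M by (intro prob_space_PiM) auto
  interpret PJ: prob_space "PiM J M" using M by (intro prob_space_PiM) auto
  interpret PIJ: prob_space "PiM (I \<union> J) M" using M by (intro prob_space_PiM) auto
  interpret pair_sigma_finite "PiM I M" "PiM J M" ..
  show "finite_measure (PiM (I \<union> J) M)" by unfold_locales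
  show "sets (distr (PiM I M \<Otimes>\<^sub>M PiM J M) (PiM (I \<union> J) M) (merge I J)) = sets (PiM (I \<union> J) M)"
    by simp
  fix K A assume K: "finite K" "K \<subseteq> I \<union> J" and A: "\<And>i. i \<in> K \<Longrightarrow> A i \<in> sets (M i)"
  let ?X = "prod_emb (I \<union> J) M K (Pi\<^sub>E K A)"
  have "PiM (I \<union> J) M ?X = (\<Prod>i\<in>K. M i (A i))"
    using M K A by (intro emeasure_PiM_emb) auto
  also have "\<dots> = (\<Prod>i\<in>K \<inter> I. M i (A i)) * (\<Prod>i\<in>K \<inter> J. M i (A i))"
  proof -
    have "K = (K \<inter> I) \<union> (K \<inter> J)" using K by auto
    then have "(\<Prod>i\<in>K. M i (A i)) = (\<Prod>i\<in>(K \<inter> I) \<union> (K \<inter> J). M i (A i))" by simp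
    also have "\<dots> = (\<Prod>i\<in>K \<inter> I. M i (A i)) * (\<Prod>i\<in>K \<inter> J. M i (A i))"
      using K IJ by (intro prod.union_disjoint) auto
    finally show ?thesis .
  qed
  also have "(\<Prod>i\<in>K \<inter> I. M i (A i)) = PiM I M (prod_emb I M (K \<inter> I) (Pi\<^sub>E (K \<inter> I) A))"
    using M K A by (intro emeasure_PiM_emb[symmetric]) auto
  also have "(\<Prod>i\<in>K \<inter> J. M i (A i)) = PiM J M (prod_emb J M (K \<inter> J) (Pi\<^sub>E (K \<inter> J) A))"
    using M K A by (intro emeasure_PiM_emb[symmetric]) auto
  also have "PiM I M (prod_emb I M (K \<inter> I) (Pi\<^sub>E (K \<inter> I) A)) * PiM J M (prod_emb J M (K \<inter> J) (Pi\<^sub>E (K \<inter> J) A))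
     = (PiM I M \<Otimes>\<^sub>M PiM J M) (prod_emb I M (K \<inter> I) (Pi\<^sub>E (K \<inter> I) A) \<times> prod_emb J M (K \<inter> J) (Pi\<^sub>E (K \<inter> J) A))"
    using K A by (intro PJ.emeasure_pair_measure_Times[symmetric] sets_PiM_I) auto
  also have "prod_emb I M (K \<inter> I) (Pi\<^sub>E (K \<inter> I) A) \<times> prod_emb J M (K \<inter> J) (Pi\<^sub>E (K \<inter> J) A)
      = merge I J -` ?X \<inter> space (PiM I M \<Otimes>\<^sub>M PiM J M)"
    using IJ K unfolding set_eq_iff
    by (auto simp: prod_emb_def space_pair_measure space_PiM PiE_iff merge_def extensional_def split: if_splits)
  finally show "PiM (I \<union> J) M ?X = distr (PiM I M \<Otimes>\<^sub>M PiM J M) (PiM (I \<union> J) M) (merge I J) ?X"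
    using K A by (subst emeasure_distr) (auto intro!: sets_PiM_I)
qed

lemma bern_prob[simp]: "prob_space (bern q)"
  unfolding bern_def by (rule prob_space_measure_pmf)
lemma space_bern[simp]: "space (bern q) = UNIV" unfolding bern_def by simp
lemma sets_bern[simp]: "sets (bern q) = UNIV" unfolding bern_def by simp

definition monoS :: "'i set \<Rightarrow> (('i \<Rightarrow> bool) \<Rightarrow> real) \<Rightarrow> bool" where
  "monoS S f \<longleftrightarrow> (\<forall>x\<in>S \<rightarrow>\<^sub>E UNIV. \<forall>y\<in>S \<rightarrow>\<^sub>E UNIV. (\<forall>i\<in>S. x i \<longrightarrow> y i) \<longrightarrow> f x \<le> f y)"

lemma space_PiM_bern[simp]: "space (PiM S (\<lambda>_. bern q)) = S \<rightarrow>\<^sub>E UNIV"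
  by (simp add: space_PiM)

lemma prob_PiM_bern: "prob_space (PiM S (\<lambda>_. bern q))"
  by (rule prob_space_PiM) simp

lemma cheb_bern:
  fixes F G :: "bool \<Rightarrow> real"
  assumes p: "0 \<le> p" "p \<le> 1" and F: "F False \<le> F True" and G: "G False \<le> G True"
  shows "(\<integral>b. F b \<partial>bern p) * (\<integral>b. G b \<partial>bern p) \<le> (\<integral>b. F b * G b \<partial>bern p)"
proof -
  have e: "(\<integral>b. F b * G b \<partial>bern p) - (\<integral>b. F b \<partial>bern p) * (\<integral>b. G b \<partial>bern p)
     = p * (1 - p) * ((F True - F False) * (G True - G False))"
    using p unfolding bern_def by (simp add: algebra_simps power2_eq_square)
  have "0 \<le> p * (1 - p) * ((F True - F False) * (G True - G False))"
    using p F G by (intro mult_nonneg_nonneg) auto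
  with e show ?thesis by linarith
qed

lemma split_integral:
  fixes h :: "('i \<Rightarrow> bool) \<Rightarrow> real"
  assumes i: "i \<in> S" and h: "h \<in> borel_measurable (PiM S (\<lambda>_. bern p))"
    and hb: "\<And>x. x \<in> space (PiM S (\<lambda>_. bern p)) \<Longrightarrow> \<bar>h x\<bar> \<le> 1"
  shows "(\<integral>x. h x \<partial>PiM S (\<lambda>_. bern p)) =
         (\<integral>b. (\<integral>X. h (X(i := b)) \<partial>PiM (S - {i}) (\<lambda>_. bern p)) \<partial>bern p)"
proof -
  let ?P = "PiM (S - {i}) (\<lambda>_. bern p)"
  interpret PP: prob_space ?P by (rule prob_PiM_bern)
  interpret BB: prob_space "bern p" by simp
  interpret PR: pair_prob_space "bern p" ?P ..
  have S: "insert i (S - {i}) = S" using i by auto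
  have d: "distr (bern p \<Otimes>\<^sub>M ?P) (PiM S (\<lambda>_. bern p)) (\<lambda>(x, X). X(i := x)) = PiM S (\<lambda>_. bern p)"
    using distr_pair_PiM_eq_PiM[of "S - {i}" "\<lambda>_. bern p" i] S by simp
  have m: "(\<lambda>(x, X). X(i := x)) \<in> measurable (bern p \<Otimes>\<^sub>M ?P) (PiM S (\<lambda>_. bern p))"
  proof -
    have "(\<lambda>z. (snd z)(i := fst z)) \<in> measurable (bern p \<Otimes>\<^sub>M ?P) (PiM S (\<lambda>_. bern p))"
      by (rule measurable_fun_upd[where J="S - {i}"]) (use S in auto)
    then show ?thesis by (simp add: case_prod_beta')
  qed
  have "(\<integral>x. h x \<partial>PiM S (\<lambda>_. bern p)) = (\<integral>z. h ((\<lambda>(x, X). X(i := x)) z) \<partial>(bern p \<Otimes>\<^sub>M ?P))"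
    by (subst d[symmetric]) (rule integral_distr[OF m], simp add: d h)
  also have "\<dots> = (\<integral>b. (\<integral>X. h (X(i := b)) \<partial>?P) \<partial>bern p)"
  proof -
    have "integrable (bern p \<Otimes>\<^sub>M ?P) (\<lambda>z. h ((\<lambda>(x, X). X(i := x)) z))"
    proof (rule finite_measure.integrable_const_bound[where B=1])
      show "finite_measure (bern p \<Otimes>\<^sub>M ?P)" by unfold_locales
      show "AE x in bern p \<Otimes>\<^sub>M ?P. norm (h ((\<lambda>(x, X). X(i := x)) x)) \<le> 1"
        using hb measurable_space[OF m] by auto
      show "(\<lambda>z. h ((\<lambda>(x, X). X(i := x)) z)) \<in> borel_measurable (bern p \<Otimes>\<^sub>M ?P)"
        using m h by (rule measurable_compose)
    qed
    from PR.integral_fst'[OF this] show ?thesis by simp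
  qed
  finally show ?thesis .
qed

lemma upd_PiE: "i \<in> S \<Longrightarrow> X \<in> (S - {i}) \<rightarrow>\<^sub>E UNIV \<Longrightarrow> X(i := b) \<in> S \<rightarrow>\<^sub>E UNIV"
  by (auto simp: PiE_iff extensional_def)

lemma monoS_upd:
  assumes m: "monoS S f" and i: "i \<in> S"
  shows "monoS (S - {i}) (\<lambda>X. f (X(i := b)))"
  unfolding monoS_def
proof (intro ballI impI)
  fix x y assume x: "x \<in> (S - {i}) \<rightarrow>\<^sub>E UNIV" and y: "y \<in> (S - {i}) \<rightarrow>\<^sub>E UNIV"
    and le: "\<forall>j\<in>S - {i}. x j \<longrightarrow> y j"
  have "\<forall>j\<in>S. (x(i := b)) j \<longrightarrow> (y(i := b)) j" using le by auto
  then show "f (x(i := b)) \<le> f (y(i := b))"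
    using m upd_PiE[OF i x] upd_PiE[OF i y] unfolding monoS_def by blast
qed

lemma monoS_FT:
  assumes m: "monoS S f" and i: "i \<in> S" and x: "X \<in> (S - {i}) \<rightarrow>\<^sub>E UNIV"
  shows "f (X(i := False)) \<le> f (X(i := True))"
proof -
  have "\<forall>j\<in>S. (X(i := False)) j \<longrightarrow> (X(i := True)) j" by auto
  then show ?thesis
    using m upd_PiE[OF i x] upd_PiE[OF i x] unfolding monoS_def by blast
qed

lemma harris_fin:
  fixes f g :: "('i \<Rightarrow> bool) \<Rightarrow> real"
  assumes T: "finite T"
  shows "T \<subseteq> S \<Longrightarrow> 0 \<le> p \<Longrightarrow> p \<le> 1 \<Longrightarrow>
    f \<in> borel_measurable (PiM S (\<lambda>_. bern p)) \<Longrightarrow> g \<in> borel_measurable (PiM S (\<lambda>_. bern p)) \<Longrightarrow>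
    (\<And>x. x \<in> S \<rightarrow>\<^sub>E UNIV \<Longrightarrow> 0 \<le> f x \<and> f x \<le> 1) \<Longrightarrow>
    (\<And>x. x \<in> S \<rightarrow>\<^sub>E UNIV \<Longrightarrow> 0 \<le> g x \<and> g x \<le> 1) \<Longrightarrow>
    monoS S f \<Longrightarrow> monoS S g \<Longrightarrow>
    (\<And>x y. x \<in> S \<rightarrow>\<^sub>E UNIV \<Longrightarrow> y \<in> S \<rightarrow>\<^sub>E UNIV \<Longrightarrow> (\<forall>i\<in>T. x i = y i) \<Longrightarrow> f x = f y) \<Longrightarrow>
    (\<integral>x. f x \<partial>PiM S (\<lambda>_. bern p)) * (\<integral>x. g x \<partial>PiM S (\<lambda>_. bern p))
      \<le> (\<integral>x. f x * g x \<partial>PiM S (\<lambda>_. bern p))"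
  using T
proof (induction T arbitrary: S f g)
  case empty
  let ?P = "PiM S (\<lambda>_. bern p)"
  interpret PP: prob_space ?P by (rule prob_PiM_bern)
  define x0 where "x0 = (\<lambda>i\<in>S. True)"
  have x0: "x0 \<in> S \<rightarrow>\<^sub>E UNIV" unfolding x0_def by auto
  have fc: "\<And>x. x \<in> space ?P \<Longrightarrow> f x = f x0" by (rule empty.prems(10)) (use x0 in auto)
  have "(\<integral>x. f x \<partial>?P) = (\<integral>x. f x0 \<partial>?P)" by (rule Bochner_Integration.integral_cong[OF refl fc])
  moreover have "(\<integral>x. f x * g x \<partial>?P) = (\<integral>x. f x0 * g x \<partial>?P)" by (rule Bochner_Integration.integral_cong[OF refl]) (metis fc)
  ultimately show ?case using PP.prob_space by (simp add: space_PiM)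
next
  case (insert i T S f g)
  let ?P = "PiM S (\<lambda>_. bern p)"
  let ?S' = "S - {i}"
  let ?P' = "PiM ?S' (\<lambda>_. bern p)"
  interpret PP: prob_space ?P by (rule prob_PiM_bern)
  interpret PP': prob_space ?P' by (rule prob_PiM_bern)
  have iS: "i \<in> S" using insert.prems(1) by auto
  have upd: "\<And>X b. X \<in> ?S' \<rightarrow>\<^sub>E UNIV \<Longrightarrow> X(i := b) \<in> S \<rightarrow>\<^sub>E UNIV"
    using iS by (auto simp: PiE_iff extensional_def)
  have mupd: "\<And>b. (\<lambda>X. X(i := b)) \<in> measurable ?P' ?P"
  proof -
    fix b
    have "(\<lambda>X. (id X)(i := (\<lambda>_. b) X)) \<in> measurable ?P' ?P"
      by (rule measurable_fun_upd[where J="S - {i}"]) (use iS in auto)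
    then show "(\<lambda>X. X(i := b)) \<in> measurable ?P' ?P" by simp
  qed
  define F where "F b = (\<integral>X. f (X(i := b)) \<partial>?P')" for b
  define G where "G b = (\<integral>X. g (X(i := b)) \<partial>?P')" for b
  define H where "H b = (\<integral>X. f (X(i := b)) * g (X(i := b)) \<partial>?P')" for b
  have intg: "\<And>h::('i \<Rightarrow> bool) \<Rightarrow> real. h \<in> borel_measurable ?P \<Longrightarrow> (\<And>x. x \<in> S \<rightarrow>\<^sub>E UNIV \<Longrightarrow> 0 \<le> h x \<and> h x \<le> 1) \<Longrightarrow>
      integrable ?P' (\<lambda>X. h (X(i := b)))" for b
  proof -
    fix h :: "('i \<Rightarrow> bool) \<Rightarrow> real" assume hm: "h \<in> borel_measurable ?P" and hb: "\<And>x. x \<in> S \<rightarrow>\<^sub>E UNIV \<Longrightarrow> 0 \<le> h x \<and> h x \<le> 1"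
    show "integrable ?P' (\<lambda>X. h (X(i := b)))"
    proof (rule PP'.integrable_const_bound[where B=1])
      show "AE x in ?P'. norm (h (x(i := b))) \<le> 1"
      proof (rule AE_I2)
        fix x assume "x \<in> space ?P'"
        then have "x(i := b) \<in> S \<rightarrow>\<^sub>E UNIV" using upd by simp
        then show "norm (h (x(i := b))) \<le> 1" using hb by fastforce
      qed
      show "(\<lambda>X. h (X(i := b))) \<in> borel_measurable ?P'" using mupd hm by (rule measurable_compose)
    qed
  qed
  have IH: "F b * G b \<le> H b" for b
  proof -
    have a1: "T \<subseteq> ?S'" using insert.prems(1) insert.hyps(2) by auto
    have a4: "(\<lambda>X. f (X(i := b))) \<in> borel_measurable ?P'" using mupd insert.prems(4) by (rule measurable_compose)
    have a5: "(\<lambda>X. g (X(i := b))) \<in> borel_measurable ?P'" using mupd insert.prems(5) by (rule measurable_compose)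
    have a6: "\<And>x. x \<in> ?S' \<rightarrow>\<^sub>E UNIV \<Longrightarrow> 0 \<le> f (x(i := b)) \<and> f (x(i := b)) \<le> 1" by (rule insert.prems(6)[OF upd])
    have a7: "\<And>x. x \<in> ?S' \<rightarrow>\<^sub>E UNIV \<Longrightarrow> 0 \<le> g (x(i := b)) \<and> g (x(i := b)) \<le> 1" by (rule insert.prems(7)[OF upd])
    have a8: "monoS ?S' (\<lambda>X. f (X(i := b)))" using insert.prems(8) iS by (rule monoS_upd)
    have a9: "monoS ?S' (\<lambda>X. g (X(i := b)))" using insert.prems(9) iS by (rule monoS_upd)
    have a10: "\<And>x y. x \<in> ?S' \<rightarrow>\<^sub>E UNIV \<Longrightarrow> y \<in> ?S' \<rightarrow>\<^sub>E UNIV \<Longrightarrow> \<forall>j\<in>T. x j = y j \<Longrightarrow> f (x(i := b)) = f (y(i := b))"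
    proof -
      fix x y :: "'i \<Rightarrow> bool" assume x: "x \<in> ?S' \<rightarrow>\<^sub>E UNIV" and y: "y \<in> ?S' \<rightarrow>\<^sub>E UNIV" and e: "\<forall>j\<in>T. x j = y j"
      have "\<forall>j\<in>insert i T. (x(i := b)) j = (y(i := b)) j" using e by auto
      then show "f (x(i := b)) = f (y(i := b))" by (rule insert.prems(10)[OF upd[OF x] upd[OF y]])
    qed
    show ?thesis unfolding F_def G_def H_def
      by (rule insert.IH[OF a1 insert.prems(2,3) a4 a5 a6 a7 a8 a9 a10])
  qed
  have FM: "F False \<le> F True" unfolding F_def
    by (rule Bochner_Integration.integral_mono[OF intg[OF insert.prems(4,6)] intg[OF insert.prems(4,6)]]) (assumption, assumption, rule monoS_FT[OF insert.prems(8) iS], simp)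
  have GM: "G False \<le> G True" unfolding G_def
    by (rule Bochner_Integration.integral_mono[OF intg[OF insert.prems(5,7)] intg[OF insert.prems(5,7)]]) (assumption, assumption, rule monoS_FT[OF insert.prems(9) iS], simp)
  have fgm: "(\<lambda>x. f x * g x) \<in> borel_measurable ?P" using insert.prems(4,5) by measurable
  have fgb: "\<And>x. x \<in> S \<rightarrow>\<^sub>E UNIV \<Longrightarrow> 0 \<le> f x * g x \<and> f x * g x \<le> 1"
    using insert.prems(6,7) by (metis mult_le_one mult_nonneg_nonneg)
  have sp: "\<And>h::('i \<Rightarrow> bool) \<Rightarrow> real. h \<in> borel_measurable ?P \<Longrightarrow> (\<And>x. x \<in> S \<rightarrow>\<^sub>E UNIV \<Longrightarrow> 0 \<le> h x \<and> h x \<le> 1) \<Longrightarrow>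
     (\<integral>x. h x \<partial>?P) = (\<integral>b. (\<integral>X. h (X(i := b)) \<partial>?P') \<partial>bern p)"
    by (rule split_integral[OF iS]) auto
  have "(\<integral>x. f x \<partial>?P) * (\<integral>x. g x \<partial>?P) = (\<integral>b. F b \<partial>bern p) * (\<integral>b. G b \<partial>bern p)"
    unfolding F_def G_def using sp[OF insert.prems(4,6)] sp[OF insert.prems(5,7)] by metis
  also have "\<dots> \<le> (\<integral>b. F b * G b \<partial>bern p)" by (rule cheb_bern) (use insert.prems(2,3) FM GM in auto)
  also have "\<dots> \<le> (\<integral>b. H b \<partial>bern p)"
    by (rule integral_mono) (auto simp: IH bern_def intro!: integrable_measure_pmf_finite)
  also have "\<dots> = (\<integral>x. f x * g x \<partial>?P)" unfolding H_def using sp[OF fgm fgb] by metis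
  finally show ?case .
qed

lemma adj_mono: "F \<subseteq> G \<Longrightarrow> adj F \<subseteq> adj G"
  unfolding adj_def by auto

lemma component_mono: "F \<subseteq> G \<Longrightarrow> component F v \<subseteq> component G v"
  unfolding component_def using rtrancl_mono[OF adj_mono] by blast

lemma component_self[simp]: "v \<in> component F v"
  unfolding component_def by simp

lemma sym_adj: "sym (adj F)"
  unfolding adj_def sym_def by auto

lemma rtrancl_adj_sym: "(a, b) \<in> (adj F)\<^sup>* \<Longrightarrow> (b, a) \<in> (adj F)\<^sup>*"
  by (meson sym_adj sym_rtrancl symD)

lemma component_eq: "y \<in> component F x \<Longrightarrow> component F y = component F x"
  unfolding component_def
  by (auto intro: rtrancl_trans dest: rtrancl_adj_sym)

lemma component_meet: "z \<in> component F a \<Longrightarrow> z \<in> component F b \<Longrightarrow> component F a = component F b"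
  using component_eq by metis

lemma component_iff: "component F a = component F b \<longleftrightarrow> b \<in> component F a"
  by (metis component_eq component_self)

lemma comp_closed:
  assumes "v \<in> Z" and cl: "\<And>a b. a \<in> Z \<Longrightarrow> (a, b) \<in> adj F \<Longrightarrow> b \<in> Z"
  shows "component F v \<subseteq> Z"
proof
  fix y assume "y \<in> component F v"
  then have "(v, y) \<in> (adj F)\<^sup>*" unfolding component_def by simp
  then show "y \<in> Z"
    by (induction rule: rtrancl_induct) (use assms in auto)
qed

lemma comp_restrict:
  assumes GF: "G \<subseteq> F" and st: "\<And>a b. a \<in> component F x \<Longrightarrow> (a, b) \<in> adj F \<Longrightarrow> (a, b) \<in> adj G"
  shows "component F x = component G x"
proof
  show "component G x \<subseteq> component F x" by (rule component_mono[OF GF])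
  show "component F x \<subseteq> component G x"
  proof
    fix y assume "y \<in> component F x"
    then have "(x, y) \<in> (adj F)\<^sup>*" unfolding component_def by simp
    then have "(x, y) \<in> (adj G)\<^sup>*"
    proof (induction rule: rtrancl_induct)
      case base then show ?case by simp
    next
      case (step a b)
      then have "a \<in> component F x" unfolding component_def by simp
      with step have "(a, b) \<in> adj G" using st by blast
      with step.IH show ?case by (rule rtrancl_into_rtrancl)
    qed
    then show "y \<in> component G x" unfolding component_def by simp
  qed
qed

lemma rep_in: "C \<noteq> {} \<Longrightarrow> rep (C :: vertex set) \<in> C"
proof -
  assume "C \<noteq> {}"
  then obtain c where c: "c \<in> C" by auto
  then have "\<exists>n. n \<in> to_nat ` C" by auto
  then have "(LEAST n. n \<in> to_nat ` C) \<in> to_nat ` C" by (rule LeastI_ex)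
  then obtain d where "d \<in> C" "(LEAST n. n \<in> to_nat ` C) = to_nat d" by auto
  then show ?thesis unfolding rep_def by simp
qed

lemma rep_component: "rep (component F v) \<in> component F v"
  by (rule rep_in) (use component_self in blast)

lemma rep_component_inj:
  "rep (component F a) = rep (component F b) \<Longrightarrow> component F a = component F b"
  by (metis component_meet rep_component)

lemma extB_props:
  assumes "barrier B"
  shows "extB B \<in> components (E2 - B) \<and> infinite (extB B)"
proof -
  have "\<exists>!C. C \<in> components (E2 - B) \<and> infinite C" using assms unfolding barrier_def by blast
  then show ?thesis unfolding extB_def by (rule theI')
qed

lemma extB_step:
  assumes "barrier B" "a \<in> extB B" "(a, b) \<in> adj (E2 - B)"
  shows "b \<in> extB B"
proof -
  obtain x0 where x0: "extB B = component (E2 - B) x0"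
    using extB_props[OF assms(1)] unfolding components_def by auto
  then show ?thesis using assms(2,3) unfolding component_def by auto
qed

lemma intB_ext_disj:
  assumes "barrier B" "u \<in> intB B"
  shows "component (E2 - B) u \<inter> extB B = {}"
proof (rule ccontr)
  assume "component (E2 - B) u \<inter> extB B \<noteq> {}"
  then obtain z where z: "z \<in> component (E2 - B) u" "z \<in> extB B" by auto
  obtain C where C: "C \<in> components (E2 - B)" "finite C" "u \<in> C"
    using assms(2) unfolding intB_def by auto
  obtain x where x: "C = component (E2 - B) x" using C(1) unfolding components_def by auto
  have Cu: "component (E2 - B) u = C" using C(3) x component_eq by metis
  obtain x0 where x0: "extB B = component (E2 - B) x0"
    using extB_props[OF assms(1)] unfolding components_def by auto
  have "C = extB B" using z Cu x0 component_meet by metis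
  then show False using C(2) extB_props[OF assms(1)] by simp
qed

lemma card_image_refine:
  assumes "finite X" "\<And>a b. a \<in> X \<Longrightarrow> b \<in> X \<Longrightarrow> f a = f b \<Longrightarrow> g a = g b"
  shows "card (g ` X) \<le> card (f ` X)"
proof -
  define h where "h c = g (SOME a. a \<in> X \<and> f a = c)" for c
  have "g ` X = h ` (f ` X)"
  proof (intro equalityI subsetI)
    fix y assume "y \<in> g ` X"
    then obtain a where a: "a \<in> X" "y = g a" by auto
    have "\<exists>a'. a' \<in> X \<and> f a' = f a" using a by auto
    then have s: "(SOME a'. a' \<in> X \<and> f a' = f a) \<in> X \<and> f (SOME a'. a' \<in> X \<and> f a' = f a) = f a"
      by (rule someI_ex)
    then have "h (f a) = g a" unfolding h_def using assms(2) a by metis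
    then show "y \<in> h ` (f ` X)" using a by (metis image_eqI)
  next
    fix y assume "y \<in> h ` (f ` X)"
    then obtain a where a: "a \<in> X" "y = h (f a)" by auto
    have "\<exists>a'. a' \<in> X \<and> f a' = f a" using a by auto
    then have s: "(SOME a'. a' \<in> X \<and> f a' = f a) \<in> X \<and> f (SOME a'. a' \<in> X \<and> f a' = f a) = f a"
      by (rule someI_ex)
    then show "y \<in> g ` X" unfolding a h_def by auto
  qed
  then show ?thesis using assms(1) by (simp add: card_image_le)
qed

lemma card_image_same:
  assumes "finite X" "\<And>a b. a \<in> X \<Longrightarrow> b \<in> X \<Longrightarrow> f a = f b \<longleftrightarrow> g a = g b"
  shows "card (g ` X) = card (f ` X)"
  using card_image_refine[of X f g] card_image_refine[of X g f] assms by (meson le_antisym)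

definition box :: "nat \<Rightarrow> vertex set" where
  "box n = {-int n..int n} \<times> {-int n..int n}"

definition Box :: "nat \<Rightarrow> edge set" where
  "Box n = {e. fst e \<in> box n \<and> snd e \<in> box n}"

lemma finite_box: "finite (box n)" unfolding box_def by simp

lemma finite_Box: "finite (Box n)"
proof -
  have "Box n \<subseteq> box n \<times> box n" unfolding Box_def by auto
  then show ?thesis using finite_box by (meson finite_SigmaI finite_subset)
qed

lemma box_mono: "n \<le> m \<Longrightarrow> box n \<subseteq> box m" unfolding box_def by auto

lemma Box_mono: "n \<le> m \<Longrightarrow> Box n \<subseteq> Box m" unfolding Box_def using box_mono by blast

lemma in_box: "v \<in> box (nat \<bar>fst v\<bar> + nat \<bar>snd v\<bar>)"
  unfolding box_def by (cases v) auto

lemma path_box: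
  assumes "(a, b) \<in> (adj F)\<^sup>*"
  shows "\<exists>n. (a, b) \<in> (adj (F \<inter> Box n))\<^sup>*"
  using assms
proof (induction rule: rtrancl_induct)
  case base then show ?case by auto
next
  case (step c b)
  then obtain n where n: "(a, c) \<in> (adj (F \<inter> Box n))\<^sup>*" by auto
  define m where "m = max n (max (nat \<bar>fst c\<bar> + nat \<bar>snd c\<bar>) (nat \<bar>fst b\<bar> + nat \<bar>snd b\<bar>))"
  have cb: "c \<in> box m" "b \<in> box m"
    using in_box[of c] in_box[of b] box_mono unfolding m_def by (meson max.cobounded1 max.cobounded2 subsetD)+
  have "(a, c) \<in> (adj (F \<inter> Box m))\<^sup>*"
    using n rtrancl_mono[OF adj_mono[of "F \<inter> Box n" "F \<inter> Box m"]] Box_mono[of n m]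
    unfolding m_def by auto
  moreover have "(c, b) \<in> adj (F \<inter> Box m)"
    using step(2) cb unfolding adj_def Box_def by auto
  ultimately show ?case by (meson rtrancl_into_rtrancl)
qed

lemma eventually_component_Box:
  "eventually (\<lambda>n. b \<in> component (F \<inter> Box n) a \<longleftrightarrow> b \<in> component F a) sequentially"
proof (cases "b \<in> component F a")
  case True
  then obtain n0 where "(a, b) \<in> (adj (F \<inter> Box n0))\<^sup>*" using path_box unfolding component_def by blast
  then have "\<forall>n\<ge>n0. b \<in> component (F \<inter> Box n) a"
    using component_mono[of "F \<inter> Box n0"] Box_mono unfolding component_def
    by (metis (no_types, lifting) Int_mono mem_Collect_eq order_refl subsetD)
  then show ?thesis using True by (auto simp: eventually_sequentially)
next
  case False
  have "\<forall>n. b \<notin> component (F \<inter> Box n) a" using False component_mono[of "F \<inter> Box _" F] by blast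
  then show ?thesis using False by simp
qed

lemma fin_dep_meas:
  fixes \<phi> :: "('i \<Rightarrow> bool) \<Rightarrow> real"
  assumes T: "finite T" "T \<subseteq> S" and dep: "\<And>x. x \<in> S \<rightarrow>\<^sub>E UNIV \<Longrightarrow> \<phi> x = \<phi> (restrict x T)"
  shows "\<phi> \<in> borel_measurable (PiM S (\<lambda>_. bern q))"
proof -
  have m1: "\<phi> \<in> borel_measurable (PiM T (\<lambda>_. bern q))"
  proof (rule measurableI)
    fix A :: "real set"
    have fin: "finite (space (PiM T (\<lambda>_. bern q)))" using T by (simp add: finite_PiE)
    show "\<phi> -` A \<inter> space (PiM T (\<lambda>_. bern q)) \<in> sets (PiM T (\<lambda>_. bern q))"
    proof (rule sets.countable)
      fix a assume a: "a \<in> \<phi> -` A \<inter> space (PiM T (\<lambda>_. bern q))"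
      then have "{a} = Pi\<^sub>E T (\<lambda>i. {a i})" by (auto simp: PiE_iff extensional_def)
      then show "{a} \<in> sets (PiM T (\<lambda>_. bern q))" using T by (metis sets_PiM_I_finite sets_bern UNIV_I)
    next
      show "countable (\<phi> -` A \<inter> space (PiM T (\<lambda>_. bern q)))" using fin by (meson countable_finite finite_Int)
    qed
  qed auto
  have "(\<lambda>x. \<phi> (restrict x T)) \<in> borel_measurable (PiM S (\<lambda>_. bern q))"
    using measurable_compose[OF measurable_restrict_subset[OF T(2)] m1] .
  then show ?thesis by (rule measurable_cong[THEN iffD1, rotated]) (simp add: dep)
qed

lemma monoS_indicator:
  assumes "increasing_event S A"
  shows "monoS S (indicator A :: _ \<Rightarrow> real)"
  using assms unfolding monoS_def increasing_event_def by (auto simp: indicator_def)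

lemma harris_limit:
  fixes fs :: "nat \<Rightarrow> ('i \<Rightarrow> bool) \<Rightarrow> real" and f :: "('i \<Rightarrow> bool) \<Rightarrow> real"
  assumes p: "0 \<le> p" "p \<le> 1"
    and A: "A \<in> sets (PiM S (\<lambda>_. bern p))" "increasing_event S A"
    and fm: "\<And>n. fs n \<in> borel_measurable (PiM S (\<lambda>_. bern p))"
    and fb: "\<And>n x. x \<in> S \<rightarrow>\<^sub>E UNIV \<Longrightarrow> 0 \<le> fs n x \<and> fs n x \<le> 1"
    and fmono: "\<And>n. monoS S (fs n)"
    and T: "\<And>n. finite (T n)" "\<And>n. T n \<subseteq> S"
    and dep: "\<And>n x y. x \<in> S \<rightarrow>\<^sub>E UNIV \<Longrightarrow> y \<in> S \<rightarrow>\<^sub>E UNIV \<Longrightarrow> (\<forall>i\<in>T n. x i = y i) \<Longrightarrow> fs n x = fs n y"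
    and lim: "\<And>x. x \<in> S \<rightarrow>\<^sub>E UNIV \<Longrightarrow> (\<lambda>n. fs n x) \<longlonglongrightarrow> f x"
  shows "f \<in> borel_measurable (PiM S (\<lambda>_. bern p))"
    and "measure (PiM S (\<lambda>_. bern p)) A * (\<integral>x. f x \<partial>PiM S (\<lambda>_. bern p))
          \<le> (\<integral>x. indicator A x * f x \<partial>PiM S (\<lambda>_. bern p))"
proof -
  let ?P = "PiM S (\<lambda>_. bern p)"
  interpret PP: prob_space ?P by (rule prob_PiM_bern)
  show fmeas: "f \<in> borel_measurable ?P"
    by (rule borel_measurable_LIMSEQ_real[OF _ fm]) (use lim in simp)
  have im: "(indicator A :: _ \<Rightarrow> real) \<in> borel_measurable ?P" using A(1) by simp
  have ib: "\<And>x. x \<in> S \<rightarrow>\<^sub>E UNIV \<Longrightarrow> 0 \<le> (indicator A x :: real) \<and> (indicator A x :: real) \<le> 1"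
    by (simp add: indicator_def)
  have ineq: "(\<integral>x. fs n x \<partial>?P) * (\<integral>x. indicator A x \<partial>?P) \<le> (\<integral>x. fs n x * indicator A x \<partial>?P)" for n
    by (rule harris_fin[OF T(1) T(2) p fm im fb ib fmono monoS_indicator[OF A(2)] dep])
  have c1: "(\<lambda>n. \<integral>x. fs n x \<partial>?P) \<longlonglongrightarrow> (\<integral>x. f x \<partial>?P)"
  proof (rule integral_dominated_convergence[where w="\<lambda>_. 1"])
    show "f \<in> borel_measurable ?P" by fact
    show "\<And>n. fs n \<in> borel_measurable ?P" by fact
    show "integrable ?P (\<lambda>_. 1::real)" by simp
    show "AE x in ?P. (\<lambda>n. fs n x) \<longlonglongrightarrow> f x" using lim by (intro AE_I2) simp
    show "\<And>n. AE x in ?P. norm (fs n x) \<le> 1" using fb by fastforce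
  qed
  have c2: "(\<lambda>n. \<integral>x. fs n x * indicator A x \<partial>?P) \<longlonglongrightarrow> (\<integral>x. f x * indicator A x \<partial>?P)"
  proof (rule integral_dominated_convergence[where w="\<lambda>_. 1"])
    show "(\<lambda>x. f x * indicator A x) \<in> borel_measurable ?P" using fmeas im by measurable
    show "\<And>n. (\<lambda>x. fs n x * indicator A x) \<in> borel_measurable ?P" using fm im by measurable
    show "integrable ?P (\<lambda>_. 1::real)" by simp
    show "AE x in ?P. (\<lambda>n. fs n x * indicator A x) \<longlonglongrightarrow> f x * indicator A x"
      using lim by (intro AE_I2) (auto intro!: tendsto_mult_right)
    show "\<And>n. AE x in ?P. norm (fs n x * indicator A x) \<le> 1"
      using fb by (fastforce simp: indicator_def)
  qed
  have "(\<integral>x. f x \<partial>?P) * (\<integral>x. indicator A x \<partial>?P) \<le> (\<integral>x. f x * indicator A x \<partial>?P)"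
    by (rule LIMSEQ_le[OF tendsto_mult_right[OF c1] c2]) (use ineq in auto)
  moreover have "(\<integral>x. indicator A x \<partial>?P) = measure ?P A"
    using A(1) sets.sets_into_space[OF A(1)] by (simp add: Int_absorb2 del: space_PiM_bern)
  ultimately show "measure ?P A * (\<integral>x. f x \<partial>?P) \<le> (\<integral>x. indicator A x * f x \<partial>?P)"
    by (simp add: mult.commute)
qed

definition Vs :: "edge set list \<Rightarrow> vertex set" where
  "Vs Bs = \<Inter> (extB ` set Bs)"
definition SVs :: "edge set list \<Rightarrow> edge set" where
  "SVs Bs = {e \<in> E2. fst e \<in> \<Inter> (extB ` set Bs) \<and> snd e \<in> \<Inter> (extB ` set Bs) \<and> e \<notin> \<Union> (set Bs)}"
definition Ws :: "edge set list \<Rightarrow> edge set" where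
  "Ws Bs = E2 - SVs Bs"

lemma barrier_sub: "barrier B \<Longrightarrow> B \<subseteq> E2" unfolding barrier_def by auto

lemma adj_E2: "(a, b) \<in> adj {e \<in> E2. P e} \<longleftrightarrow> ((a, b) \<in> E2 \<and> P (a, b)) \<or> ((b, a) \<in> E2 \<and> P (b, a))"
  unfolding adj_def by auto

lemma V_step:
  assumes bar: "\<forall>B\<in>set Bs. barrier B" and cl: "\<forall>B\<in>set Bs. \<forall>e\<in>B. \<not> y e"
    and a: "a \<in> Vs Bs" and ab: "(a, b) \<in> adj {e \<in> E2. y e}"
  shows "b \<in> Vs Bs \<and> (a, b) \<in> adj {e \<in> SVs Bs. y e}"
proof -
  obtain e where e: "e \<in> E2" "y e" "e = (a, b) \<or> e = (b, a)" using ab unfolding adj_def by blast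
  have nB: "e \<notin> \<Union> (set Bs)" using cl e(2) by auto
  have b: "b \<in> extB B" if B: "B \<in> set Bs" for B
  proof -
    have "a \<in> extB B" using a B unfolding Vs_def by auto
    moreover have "(a, b) \<in> adj (E2 - B)" using e nB B unfolding adj_def by auto
    ultimately show ?thesis using extB_step bar B by blast
  qed
  then have bV: "b \<in> Vs Bs" unfolding Vs_def by auto
  have "e \<in> SVs Bs" using e nB a bV unfolding SVs_def Vs_def by auto
  then have "(a, b) \<in> adj {e \<in> SVs Bs. y e}" using e unfolding adj_def by auto
  with bV show ?thesis by simp
qed

lemma clusterV:
  assumes bar: "\<forall>B\<in>set Bs. barrier B" and cl: "\<forall>B\<in>set Bs. \<forall>e\<in>B. \<not> y e"
    and v: "v \<in> Vs Bs"
  shows "component {e \<in> E2. y e} v = component {e \<in> SVs Bs. y e} v"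
    and "component {e \<in> E2. y e} v \<subseteq> Vs Bs"
proof -
  show sub: "component {e \<in> E2. y e} v \<subseteq> Vs Bs"
    by (rule comp_closed[OF v]) (use V_step[OF bar cl] in blast)
  show "component {e \<in> E2. y e} v = component {e \<in> SVs Bs. y e} v"
  proof (rule comp_restrict)
    show "{e \<in> SVs Bs. y e} \<subseteq> {e \<in> E2. y e}" unfolding SVs_def by auto
    show "\<And>a b. a \<in> component {e \<in> E2. y e} v \<Longrightarrow> (a, b) \<in> adj {e \<in> E2. y e} \<Longrightarrow> (a, b) \<in> adj {e \<in> SVs Bs. y e}"
      using V_step[OF bar cl] sub by blast
  qed
qed

lemma clusterS_sub:
  assumes v: "v \<in> Vs Bs"
  shows "component {e \<in> SVs Bs. P e} v \<subseteq> Vs Bs"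
  by (rule comp_closed[OF v]) (auto simp: adj_def SVs_def Vs_def)

lemma clusterU:
  assumes bar: "\<forall>B\<in>set Bs. barrier B" and cl: "\<forall>B\<in>set Bs. \<forall>e\<in>B. \<not> y e"
    and B: "B \<in> set Bs" and u: "u \<in> intB B"
  shows "component {e \<in> E2. y e} u = component {e \<in> Ws Bs. y e} u"
    and "component {e \<in> E2. y e} u \<inter> Vs Bs = {}"
    and "component {e \<in> Ws Bs. y e} u \<inter> Vs Bs = {}"
proof -
  let ?Z = "component (E2 - B) u"
  have stepZ: "b \<in> ?Z \<and> (a, b) \<in> adj {e \<in> Ws Bs. y e}"
    if a: "a \<in> ?Z" and ab: "(a, b) \<in> adj {e \<in> E2. y e}" for a b
  proof -
    obtain e where e: "e \<in> E2" "y e" "e = (a, b) \<or> e = (b, a)" using ab unfolding adj_def by blast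
    have nB: "e \<notin> B" using cl e(2) B by auto
    have "(a, b) \<in> adj (E2 - B)" using e nB unfolding adj_def by auto
    then have bZ: "b \<in> ?Z" using a unfolding component_def by auto
    have "a \<notin> extB B" using intB_ext_disj[OF bar[rule_format, OF B] u] a by auto
    then have "a \<notin> Vs Bs" using B unfolding Vs_def by auto
    then have "e \<notin> SVs Bs" using e(3) unfolding SVs_def Vs_def by auto
    then have "e \<in> Ws Bs" using e(1) unfolding Ws_def by auto
    then have "(a, b) \<in> adj {e \<in> Ws Bs. y e}" using e unfolding adj_def by auto
    with bZ show ?thesis by simp
  qed
  have subZ: "component {e \<in> E2. y e} u \<subseteq> ?Z"
    by (rule comp_closed) (use stepZ in auto)
  have ZV: "?Z \<inter> Vs Bs = {}"
    using intB_ext_disj[OF bar[rule_format, OF B] u] B unfolding Vs_def by auto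
  show eq: "component {e \<in> E2. y e} u = component {e \<in> Ws Bs. y e} u"
  proof (rule comp_restrict)
    show "{e \<in> Ws Bs. y e} \<subseteq> {e \<in> E2. y e}" unfolding Ws_def by auto
    show "\<And>a b. a \<in> component {e \<in> E2. y e} u \<Longrightarrow> (a, b) \<in> adj {e \<in> E2. y e} \<Longrightarrow> (a, b) \<in> adj {e \<in> Ws Bs. y e}"
      using stepZ subZ by blast
  qed
  show "component {e \<in> E2. y e} u \<inter> Vs Bs = {}" using subZ ZV by blast
  then show "component {e \<in> Ws Bs. y e} u \<inter> Vs Bs = {}" using eq by simp
qed

definition rho :: "real \<Rightarrow> bool \<Rightarrow> real" where "rho r \<kappa> = (if \<kappa> then r else 1 - r)"
definition openS :: "edge set list \<Rightarrow> (edge \<Rightarrow> bool) \<Rightarrow> edge set" where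
  "openS Bs x = {e \<in> SVs Bs. x e}"
definition fS :: "edge set list \<Rightarrow> vertex list \<Rightarrow> real \<Rightarrow> bool \<Rightarrow> (edge \<Rightarrow> bool) \<Rightarrow> real" where
  "fS Bs vs r \<kappa> x = rho r \<kappa> ^ card ((\<lambda>v. component (openS Bs x) v) ` set vs)"
definition Jw :: "edge set list \<Rightarrow> (edge \<times> bool) list \<Rightarrow> (edge \<Rightarrow> bool) \<Rightarrow> bool" where
  "Jw Bs es w \<longleftrightarrow> (\<forall>B\<in>set Bs. \<forall>e\<in>B. \<not> w e) \<and> (\<forall>(e, s)\<in>set es. w e = s)"
definition clW :: "edge set list \<Rightarrow> (edge \<Rightarrow> bool) \<Rightarrow> vertex \<Rightarrow> vertex set" where
  "clW Bs w u = component {e \<in> Ws Bs. w e} u"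
definition Ru :: "edge set list \<Rightarrow> (vertex \<times> bool) list \<Rightarrow> (edge \<Rightarrow> bool) \<Rightarrow> vertex set" where
  "Ru Bs us w = (\<lambda>u. rep (clW Bs w u)) ` fst ` set us"
definition Tu :: "edge set list \<Rightarrow> (vertex \<times> bool) list \<Rightarrow> (edge \<Rightarrow> bool) \<Rightarrow> vertex \<Rightarrow> bool set" where
  "Tu Bs us w z = {t. \<forall>(u, cu)\<in>set us. rep (clW Bs w u) = z \<longrightarrow> cu = t}"
definition gW :: "edge set list \<Rightarrow> (vertex \<times> bool) list \<Rightarrow> real \<Rightarrow> (edge \<Rightarrow> bool) \<Rightarrow> ennreal" where
  "gW Bs us r w = (\<Prod>z\<in>Ru Bs us w. emeasure (bern r) (Tu Bs us w z))"
definition Jg :: "edge set list \<Rightarrow> (edge \<times> bool) list \<Rightarrow> (vertex \<times> bool) list \<Rightarrow> real \<Rightarrow> (edge \<Rightarrow> bool) \<Rightarrow> ennreal" where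
  "Jg Bs es us r w = (if Jw Bs es w then gW Bs us r w else 0)"

lemma Ru_Tu:
  "(\<forall>(u, cu)\<in>set us. c (rep (clW Bs w u)) = cu) \<longleftrightarrow> (\<forall>z\<in>Ru Bs us w. c z \<in> Tu Bs us w z)"
  unfolding Ru_def Tu_def by force

lemma emeasure_bern_single: "0 \<le> r \<Longrightarrow> r \<le> 1 \<Longrightarrow> emeasure (bern r) {\<kappa>} = ennreal (rho r \<kappa>)"
  unfolding bern_def rho_def by (simp add: emeasure_pmf_single)

lemma colour_measure:
  fixes R1 R2 :: "vertex set" and X :: "vertex \<Rightarrow> bool set"
  assumes R: "finite R1" "finite R2" "R1 \<inter> R2 = {}" and r: "0 \<le> r" "r \<le> 1"
  shows "emeasure (PiM UNIV (\<lambda>_. bern r)) {c \<in> space (PiM UNIV (\<lambda>_. bern r)). (\<forall>z\<in>R1. c z \<in> X z) \<and> (\<forall>z\<in>R2. c z = \<kappa>)}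
     = (\<Prod>z\<in>R1. emeasure (bern r) (X z)) * ennreal (rho r \<kappa>) ^ card R2"
proof -
  interpret BR: prob_space "bern r" by simp
  interpret PPS: product_prob_space "\<lambda>_::vertex. bern r" UNIV
    by unfold_locales
  define Y where "Y z = (if z \<in> R1 then X z else {\<kappa>})" for z
  have "{c \<in> space (PiM UNIV (\<lambda>_. bern r)). (\<forall>z\<in>R1. c z \<in> X z) \<and> (\<forall>z\<in>R2. c z = \<kappa>)}
      = {c \<in> space (PiM UNIV (\<lambda>_. bern r)). \<forall>z\<in>R1 \<union> R2. c z \<in> Y z}"
    using R(3) unfolding Y_def by auto
  also have "emeasure (PiM UNIV (\<lambda>_. bern r)) \<dots> = (\<Prod>z\<in>R1 \<union> R2. emeasure (bern r) (Y z))"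
    using PPS.emeasure_PiM_Collect[of "R1 \<union> R2" Y] R by simp
  also have "\<dots> = (\<Prod>z\<in>R1. emeasure (bern r) (Y z)) * (\<Prod>z\<in>R2. emeasure (bern r) (Y z))"
    using R by (intro prod.union_disjoint) auto
  also have "(\<Prod>z\<in>R1. emeasure (bern r) (Y z)) = (\<Prod>z\<in>R1. emeasure (bern r) (X z))"
    unfolding Y_def by simp
  also have "(\<Prod>z\<in>R2. emeasure (bern r) (Y z)) = (\<Prod>z\<in>R2. ennreal (rho r \<kappa>))"
    using R(3) r unfolding Y_def by (intro prod.cong) (auto simp: emeasure_bern_single)
  finally show ?thesis by simp
qed

definition Iset :: "edge set list \<Rightarrow> (edge \<times> bool) list \<Rightarrow> (vertex \<times> bool) list \<Rightarrow> vertex list \<Rightarrow> bool \<Rightarrow> real \<Rightarrow> real \<Rightarrow> ((edge \<Rightarrow> bool) \<times> (vertex \<Rightarrow> bool)) set" where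
  "Iset Bs es us vs \<kappa> p r = {\<omega> \<in> space (DaC p r).
              (\<forall>B\<in>set Bs. \<forall>e\<in>B. \<not> Ystate \<omega> e) \<and>
              (\<forall>(e, s)\<in>set es. Ystate \<omega> e = s) \<and>
              (\<forall>(u, c)\<in>set us. Xcol \<omega> u = c) \<and>
              (\<forall>v\<in>set vs. Xcol \<omega> v = \<kappa>)}"

lemma U_not_V:
  assumes bar: "\<forall>B\<in>set Bs. barrier B" and u: "u \<in> \<Union> (intB ` set Bs)"
  shows "u \<notin> Vs Bs"
proof -
  obtain B where B: "B \<in> set Bs" "u \<in> intB B" using u by auto
  have "u \<notin> extB B" using intB_ext_disj[OF bar[rule_format, OF B(1)] B(2)] component_self by blast
  then show ?thesis using B(1) unfolding Vs_def by auto
qed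

lemma disj_WS: "Ws Bs \<inter> SVs Bs = {}" unfolding Ws_def by auto
lemma WS_E2: "Ws Bs \<union> SVs Bs = E2" unfolding Ws_def SVs_def by auto
lemma SVs_alt: "SVs Bs = {e \<in> E2. fst e \<in> Vs Bs \<and> snd e \<in> Vs Bs \<and> e \<notin> \<Union> (set Bs)}"
  unfolding SVs_def Vs_def ..

lemma key:
  assumes bar: "\<forall>B\<in>set Bs. barrier B"
    and esA: "\<forall>(e, s)\<in>set es. e \<in> E2 \<and> fst e \<in> \<Union> (intB ` set Bs) \<and> snd e \<in> \<Union> (intB ` set Bs) \<and> e \<notin> \<Union> (set Bs)"
    and usA: "\<forall>(u, c)\<in>set us. u \<in> \<Union> (intB ` set Bs)"
    and vsA: "\<forall>v\<in>set vs. v \<in> Vs Bs"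
    and r: "0 \<le> r" "r \<le> 1"
    and w: "w \<in> space (PiM (Ws Bs) (\<lambda>_. bern p))" and x: "x \<in> space (PiM (SVs Bs) (\<lambda>_. bern p))"
  shows "emeasure (PiM UNIV (\<lambda>_. bern r))
      (Pair (merge (Ws Bs) (SVs Bs) (w, x)) -` (Iset Bs es us vs \<kappa> p r \<inter> {\<omega> \<in> space (DaC p r). restrict (Ystate \<omega>) (SVs Bs) \<in> A}))
    = Jg Bs es us r w * (indicator A x * ennreal (fS Bs vs r \<kappa> x))"
proof -
  define y where "y = merge (Ws Bs) (SVs Bs) (w, x)"
  let ?Mc = "PiM UNIV (\<lambda>_::vertex. bern r)"
  have yW: "y e = w e" if "e \<in> Ws Bs" for e using that disj_WS unfolding y_def by simp
  have yS: "y e = x e" if "e \<in> SVs Bs" for e using that disj_WS unfolding y_def by simp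
  have ysp: "y \<in> space (PiM E2 (\<lambda>_. bern p))"
    unfolding y_def using WS_E2[of Bs] extensional_merge[of "Ws Bs" "SVs Bs" w x] by (auto simp: PiE_iff)
  have xr: "restrict y (SVs Bs) = x"
    using x disj_WS[of Bs] unfolding y_def by (simp add: restrict_merge PiE_restrict)
  have Bin: "e \<in> Ws Bs" if "B \<in> set Bs" "e \<in> B" for B e
    using that barrier_sub bar unfolding Ws_def SVs_def by blast
  have esin: "e \<in> Ws Bs" if "(e, s) \<in> set es" for e s
  proof -
    have "e \<in> E2" "fst e \<in> \<Union> (intB ` set Bs)" using esA that by auto
    moreover have "fst e \<notin> Vs Bs" using U_not_V[OF bar] calculation(2) by blast
    ultimately show ?thesis unfolding Ws_def SVs_alt by auto
  qed
  have J: "((\<forall>B\<in>set Bs. \<forall>e\<in>B. \<not> y e) \<and> (\<forall>(e, s)\<in>set es. y e = s)) \<longleftrightarrow> Jw Bs es w"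
    unfolding Jw_def using Bin esin yW by fastforce
  have CU: "component {e \<in> E2. y e} u = clW Bs w u" if Jw: "Jw Bs es w" and u: "u \<in> \<Union> (intB ` set Bs)" for u
  proof -
    have cl: "\<forall>B\<in>set Bs. \<forall>e\<in>B. \<not> y e" using J Jw by blast
    obtain B where B: "B \<in> set Bs" "u \<in> intB B" using u by auto
    have "component {e \<in> E2. y e} u = component {e \<in> Ws Bs. y e} u" by (rule clusterU(1)[OF bar cl B])
    also have "{e \<in> Ws Bs. y e} = {e \<in> Ws Bs. w e}" using yW by auto
    finally show ?thesis unfolding clW_def .
  qed
  have CUV: "clW Bs w u \<inter> Vs Bs = {}" if Jw: "Jw Bs es w" and u: "u \<in> \<Union> (intB ` set Bs)" for u
  proof -
    have cl: "\<forall>B\<in>set Bs. \<forall>e\<in>B. \<not> y e" using J Jw by blast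
    obtain B where B: "B \<in> set Bs" "u \<in> intB B" using u by auto
    show ?thesis using clusterU(2)[OF bar cl B] CU[OF Jw u] by simp
  qed
  have CV: "component {e \<in> E2. y e} v = component (openS Bs x) v" if Jw: "Jw Bs es w" and v: "v \<in> Vs Bs" for v
  proof -
    have cl: "\<forall>B\<in>set Bs. \<forall>e\<in>B. \<not> y e" using J Jw by blast
    have "component {e \<in> E2. y e} v = component {e \<in> SVs Bs. y e} v" by (rule clusterV(1)[OF bar cl v])
    also have "{e \<in> SVs Bs. y e} = openS Bs x" using yS unfolding openS_def by auto
    finally show ?thesis .
  qed
  have Xc: "Xcol (y, c) u = c (rep (component {e \<in> E2. y e} u))" for c u
    unfolding Xcol_def cluster_def by simp
  have Yc: "Ystate (y, c) = y" for c unfolding Ystate_def by (simp add: fun_eq_iff)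
  have spD: "space (DaC p r) = space (PiM E2 (\<lambda>_. bern p)) \<times> space ?Mc"
    unfolding DaC_def by (simp add: space_pair_measure)
  define R2 where "R2 = rep ` (\<lambda>v. component (openS Bs x) v) ` set vs"
  show ?thesis
  proof (cases "Jw Bs es w \<and> x \<in> A")
    case False
    have "Pair y -` (Iset Bs es us vs \<kappa> p r \<inter> {\<omega> \<in> space (DaC p r). restrict (Ystate \<omega>) (SVs Bs) \<in> A}) = {}"
    proof (rule ccontr)
      assume "Pair y -` (Iset Bs es us vs \<kappa> p r \<inter> {\<omega> \<in> space (DaC p r). restrict (Ystate \<omega>) (SVs Bs) \<in> A}) \<noteq> {}"
      then obtain c where c: "(y, c) \<in> Iset Bs es us vs \<kappa> p r" "restrict (Ystate (y, c)) (SVs Bs) \<in> A" by auto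
      from c(1) have "(\<forall>B\<in>set Bs. \<forall>e\<in>B. \<not> y e) \<and> (\<forall>(e, s)\<in>set es. y e = s)"
        by (simp add: Iset_def Yc)
      with J have "Jw Bs es w" by simp
      moreover from c(2) have "x \<in> A" by (simp add: Yc xr)
      ultimately show False using False by simp
    qed
    then show ?thesis using False unfolding y_def[symmetric] Jg_def by auto
  next
    case True
    then have Jw: "Jw Bs es w" and xA: "x \<in> A" by auto
    have "Pair y -` (Iset Bs es us vs \<kappa> p r \<inter> {\<omega> \<in> space (DaC p r). restrict (Ystate \<omega>) (SVs Bs) \<in> A})
        = {c \<in> space ?Mc. (\<forall>z\<in>Ru Bs us w. c z \<in> Tu Bs us w z) \<and> (\<forall>z\<in>R2. c z = \<kappa>)}"
    proof -
      have a: "(\<forall>(u, cu)\<in>set us. Xcol (y, c) u = cu) \<longleftrightarrow> (\<forall>(u, cu)\<in>set us. c (rep (clW Bs w u)) = cu)" for c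
        using CU[OF Jw] usA unfolding Xc by fastforce
      have b: "(\<forall>v\<in>set vs. Xcol (y, c) v = \<kappa>) \<longleftrightarrow> (\<forall>z\<in>R2. c z = \<kappa>)" for c
        using CV[OF Jw] vsA unfolding Xc R2_def by auto
      show ?thesis
        using J Jw xA xr ysp a b Ru_Tu[of us _ Bs w] by (auto simp: Iset_def Yc spD)
    qed
    also have "emeasure ?Mc \<dots> = (\<Prod>z\<in>Ru Bs us w. emeasure (bern r) (Tu Bs us w z)) * ennreal (rho r \<kappa>) ^ card R2"
    proof (rule colour_measure[OF _ _ _ r])
      show "finite (Ru Bs us w)" unfolding Ru_def by simp
      show "finite R2" unfolding R2_def by simp
      show "Ru Bs us w \<inter> R2 = {}"
      proof -
        have "Ru Bs us w \<inter> Vs Bs = {}"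
          using CUV[OF Jw] usA rep_component[of "{e \<in> Ws Bs. w e}"] unfolding Ru_def clW_def by fastforce
        moreover have "R2 \<subseteq> Vs Bs"
          using clusterS_sub vsA rep_component unfolding R2_def openS_def by blast
        ultimately show ?thesis by blast
      qed
    qed
    also have "card R2 = card ((\<lambda>v. component (openS Bs x) v) ` set vs)"
      unfolding R2_def by (rule card_image) (auto intro!: inj_onI rep_component_inj)
    also have "ennreal (rho r \<kappa>) ^ card ((\<lambda>v. component (openS Bs x) v) ` set vs) = ennreal (fS Bs vs r \<kappa> x)"
      unfolding fS_def using r by (simp add: ennreal_power rho_def)
    finally have eq: "emeasure ?Mc (Pair y -` (Iset Bs es us vs \<kappa> p r \<inter> {\<omega> \<in> space (DaC p r). restrict (Ystate \<omega>) (SVs Bs) \<in> A}))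
       = (\<Prod>z\<in>Ru Bs us w. emeasure (bern r) (Tu Bs us w z)) * ennreal (fS Bs vs r \<kappa> x)" .
    have h2: "Jg Bs es us r w * (indicator A x * ennreal (fS Bs vs r \<kappa> x)) = (\<Prod>z\<in>Ru Bs us w. emeasure (bern r) (Tu Bs us w z)) * ennreal (fS Bs vs r \<kappa> x)"
      using Jw xA by (simp add: Jg_def gW_def)
    show ?thesis unfolding y_def[symmetric] by (rule trans[OF eq h2[symmetric]])
  qed
qed

definition fSn :: "edge set list \<Rightarrow> vertex list \<Rightarrow> real \<Rightarrow> bool \<Rightarrow> nat \<Rightarrow> (edge \<Rightarrow> bool) \<Rightarrow> real" where
  "fSn Bs vs r \<kappa> n x = rho r \<kappa> ^ card ((\<lambda>v. component (openS Bs x \<inter> Box n) v) ` set vs)"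

lemma rho_bounds: "0 \<le> r \<Longrightarrow> r \<le> 1 \<Longrightarrow> 0 \<le> rho r \<kappa> \<and> rho r \<kappa> \<le> 1"
  unfolding rho_def by auto

lemma card_comp_mono:
  assumes "F \<subseteq> G"
  shows "card ((\<lambda>v. component G v) ` set vs) \<le> card ((\<lambda>v. component F v) ` set vs)"
proof (rule card_image_refine)
  fix a b assume "component F a = component F b"
  then have "b \<in> component F a" using component_iff by metis
  then have "b \<in> component G a" using component_mono[OF assms] by blast
  then show "component G a = component G b" using component_iff by metis
qed simp

lemma fS_harris:
  assumes p: "0 \<le> p" "p \<le> 1" and r: "0 \<le> r" "r \<le> 1"
    and A: "A \<in> sets (PiM (SVs Bs) (\<lambda>_. bern p))" "increasing_event (SVs Bs) A"
  shows "fS Bs vs r \<kappa> \<in> borel_measurable (PiM (SVs Bs) (\<lambda>_. bern p))"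
    and "measure (PiM (SVs Bs) (\<lambda>_. bern p)) A * (\<integral>x. fS Bs vs r \<kappa> x \<partial>PiM (SVs Bs) (\<lambda>_. bern p))
          \<le> (\<integral>x. indicator A x * fS Bs vs r \<kappa> x \<partial>PiM (SVs Bs) (\<lambda>_. bern p))"
proof -
  let ?S = "SVs Bs"
  let ?T = "\<lambda>n. SVs Bs \<inter> Box n"
  have rb: "0 \<le> rho r \<kappa>" "rho r \<kappa> \<le> 1" using rho_bounds[OF r] by auto
  have os: "openS Bs x \<inter> Box n = {e \<in> ?T n. x e}" for x n unfolding openS_def by auto
  have dep: "fSn Bs vs r \<kappa> n x = fSn Bs vs r \<kappa> n y"
    if "\<forall>i\<in>?T n. x i = y i" for n x y
  proof -
    have "openS Bs x \<inter> Box n = openS Bs y \<inter> Box n" using that unfolding os by auto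
    then show ?thesis unfolding fSn_def by simp
  qed
  have fm: "fSn Bs vs r \<kappa> n \<in> borel_measurable (PiM ?S (\<lambda>_. bern p))" for n
  proof (rule fin_dep_meas)
    show "finite (?T n)" using finite_Box by blast
    show "?T n \<subseteq> ?S" by blast
    show "\<And>x. x \<in> ?S \<rightarrow>\<^sub>E UNIV \<Longrightarrow> fSn Bs vs r \<kappa> n x = fSn Bs vs r \<kappa> n (restrict x (?T n))"
      by (rule dep) simp
  qed
  have fb: "0 \<le> fSn Bs vs r \<kappa> n x \<and> fSn Bs vs r \<kappa> n x \<le> 1" for n x
    unfolding fSn_def using rb by (simp add: power_le_one)
  have fmono: "monoS ?S (fSn Bs vs r \<kappa> n)" for n
    unfolding monoS_def
  proof (intro ballI impI)
    fix x y :: "edge \<Rightarrow> bool" assume le: "\<forall>i\<in>?S. x i \<longrightarrow> y i"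
    have "openS Bs x \<inter> Box n \<subseteq> openS Bs y \<inter> Box n" using le unfolding openS_def by auto
    then have "card ((\<lambda>v. component (openS Bs y \<inter> Box n) v) ` set vs) \<le> card ((\<lambda>v. component (openS Bs x \<inter> Box n) v) ` set vs)"
      by (rule card_comp_mono)
    then show "fSn Bs vs r \<kappa> n x \<le> fSn Bs vs r \<kappa> n y"
      unfolding fSn_def using rb by (intro power_decreasing) auto
  qed
  have lim: "(\<lambda>n. fSn Bs vs r \<kappa> n x) \<longlonglongrightarrow> fS Bs vs r \<kappa> x" for x
  proof (rule tendsto_eventually)
    let ?F = "openS Bs x"
    have "\<forall>z\<in>set vs \<times> set vs. eventually (\<lambda>n. snd z \<in> component (?F \<inter> Box n) (fst z) \<longleftrightarrow> snd z \<in> component ?F (fst z)) sequentially"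
      using eventually_component_Box by blast
    then have "eventually (\<lambda>n. \<forall>z\<in>set vs \<times> set vs. snd z \<in> component (?F \<inter> Box n) (fst z) \<longleftrightarrow> snd z \<in> component ?F (fst z)) sequentially"
      by (intro eventually_ball_finite) auto
    then show "eventually (\<lambda>n. fSn Bs vs r \<kappa> n x = fS Bs vs r \<kappa> x) sequentially"
    proof (rule eventually_mono)
      fix n assume H: "\<forall>z\<in>set vs \<times> set vs. snd z \<in> component (?F \<inter> Box n) (fst z) \<longleftrightarrow> snd z \<in> component ?F (fst z)"
      have "card ((\<lambda>v. component (?F \<inter> Box n) v) ` set vs) = card ((\<lambda>v. component ?F v) ` set vs)"
      proof (rule card_image_same)
        fix a b assume ab: "a \<in> set vs" "b \<in> set vs"
        show "component ?F a = component ?F b \<longleftrightarrow> component (?F \<inter> Box n) a = component (?F \<inter> Box n) b"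
          using H ab unfolding component_iff by auto
      qed simp
      then show "fSn Bs vs r \<kappa> n x = fS Bs vs r \<kappa> x" unfolding fSn_def fS_def by simp
    qed
  qed
  note hl = harris_limit[where T = ?T and f = "fS Bs vs r \<kappa>", OF p A fm _ fmono]
  show "fS Bs vs r \<kappa> \<in> borel_measurable (PiM ?S (\<lambda>_. bern p))"
    by (rule hl(1)) (use fb dep lim finite_Box in auto)
  show "measure (PiM ?S (\<lambda>_. bern p)) A * (\<integral>x. fS Bs vs r \<kappa> x \<partial>PiM ?S (\<lambda>_. bern p))
          \<le> (\<integral>x. indicator A x * fS Bs vs r \<kappa> x \<partial>PiM ?S (\<lambda>_. bern p))"
    by (rule hl(2)) (use fb dep lim finite_Box in auto)
qed

lemma main_core:
  assumes p: "0 \<le> p" "p \<le> 1" and r: "0 \<le> r" "r \<le> 1"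
    and bar: "\<forall>B\<in>set Bs. barrier B"
    and esA: "\<forall>(e, s)\<in>set es. e \<in> E2 \<and> fst e \<in> \<Union> (intB ` set Bs) \<and> snd e \<in> \<Union> (intB ` set Bs) \<and> e \<notin> \<Union> (set Bs)"
    and usA: "\<forall>(u, c)\<in>set us. u \<in> \<Union> (intB ` set Bs)"
    and vsA: "\<forall>v\<in>set vs. v \<in> Vs Bs"
    and pos: "measure (DaC p r) (Iset Bs es us vs \<kappa> p r) > 0"
    and A: "A \<in> sets (PiM (SVs Bs) (\<lambda>_. bern p))" "increasing_event (SVs Bs) A"
  shows "measure (PiM (SVs Bs) (\<lambda>_. bern p)) A \<le>
    measure (distr (uniform_measure (DaC p r) (Iset Bs es us vs \<kappa> p r)) (PiM (SVs Bs) (\<lambda>_. bern p))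
       (\<lambda>\<omega>. restrict (Ystate \<omega>) (SVs Bs))) A"
proof -
  define S where "S = SVs Bs"
  define W where "W = Ws Bs"
  define I where "I = Iset Bs es us vs \<kappa> p r"
  let ?Me = "PiM E2 (\<lambda>_::edge. bern p)"
  let ?Mc = "PiM UNIV (\<lambda>_::vertex. bern r)"
  let ?PW = "PiM W (\<lambda>_. bern p)"
  let ?PS = "PiM S (\<lambda>_. bern p)"
  let ?D = "DaC p r"
  interpret PMe: prob_space ?Me by (rule prob_PiM_bern)
  interpret PMc: prob_space ?Mc by (rule prob_PiM_bern)
  interpret PPW: prob_space ?PW by (rule prob_PiM_bern)
  interpret PPS: prob_space ?PS by (rule prob_PiM_bern)
  interpret PD: pair_prob_space ?Me ?Mc ..
  interpret PWS: pair_prob_space ?PW ?PS ..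
  have D: "?D = ?Me \<Otimes>\<^sub>M ?Mc" unfolding DaC_def ..
  have SE2: "S \<subseteq> E2" unfolding S_def SVs_def by auto
  have WS: "W \<union> S = E2" unfolding W_def S_def by (rule WS_E2)
  have Iin: "I \<in> sets ?D" using pos measure_notin_sets unfolding I_def by force
  have Yst: "Ystate = fst" by (simp add: fun_eq_iff Ystate_def)
  have Ym: "(\<lambda>\<omega>. restrict (Ystate \<omega>) S) \<in> measurable ?D ?PS"
    unfolding D Yst by (rule measurable_compose[OF measurable_fst measurable_restrict_subset[OF SE2]])
  define Q where "Q A' = I \<inter> {\<omega> \<in> space ?D. restrict (Ystate \<omega>) S \<in> A'}" for A'
  have Qin: "Q A' \<in> sets ?D" if "A' \<in> sets ?PS" for A'
  proof -
    have "{\<omega> \<in> space ?D. restrict (Ystate \<omega>) S \<in> A'} = (\<lambda>\<omega>. restrict (Ystate \<omega>) S) -` A' \<inter> space ?D" by auto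
    then have "{\<omega> \<in> space ?D. restrict (Ystate \<omega>) S \<in> A'} \<in> sets ?D" using measurable_sets[OF Ym that] by simp
    then show ?thesis unfolding Q_def using Iin by auto
  qed
  have mmerge: "merge W S \<in> measurable (?PW \<Otimes>\<^sub>M ?PS) ?Me"
    using measurable_merge[where I=W and J=S and M="\<lambda>_. bern p"] unfolding WS .
  have Me_eq: "distr (?PW \<Otimes>\<^sub>M ?PS) ?Me (merge W S) = ?Me"
    using distr_merge_PiM_inf[of W S "\<lambda>_. bern p"] disj_WS[of Bs] WS unfolding W_def S_def by simp
  have fmeas: "fS Bs vs r \<kappa> \<in> borel_measurable ?PS"
    using fS_harris(1)[OF p r A] unfolding S_def .
  have AS: "A \<in> sets ?PS" using A(1) unfolding S_def .
  let ?K = "\<lambda>A'. \<integral>\<^sup>+x. indicator A' x * ennreal (fS Bs vs r \<kappa> x) \<partial>?PS"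
  have main: "(\<lambda>w. Jg Bs es us r w * ?K A') \<in> borel_measurable ?PW \<and>
      emeasure ?D (Q A') = (\<integral>\<^sup>+w. Jg Bs es us r w * ?K A' \<partial>?PW)" if A': "A' \<in> sets ?PS" for A'
  proof -
    let ?h = "\<lambda>y. emeasure ?Mc (Pair y -` Q A')"
    have QinP: "Q A' \<in> sets (?Me \<Otimes>\<^sub>M ?Mc)" using Qin[OF A'] unfolding D .
    have hm: "?h \<in> borel_measurable ?Me" by (rule PMc.measurable_emeasure_Pair[OF QinP])
    have hmm: "(\<lambda>z. ?h (merge W S z)) \<in> borel_measurable (?PW \<Otimes>\<^sub>M ?PS)"
      using measurable_compose[OF mmerge hm] by simp
    have inner: "(\<integral>\<^sup>+x. ?h (merge W S (w, x)) \<partial>?PS) = Jg Bs es us r w * ?K A'" if w: "w \<in> space ?PW" for w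
    proof -
      have "(\<integral>\<^sup>+x. ?h (merge W S (w, x)) \<partial>?PS) = (\<integral>\<^sup>+x. Jg Bs es us r w * (indicator A' x * ennreal (fS Bs vs r \<kappa> x)) \<partial>?PS)"
      proof (rule nn_integral_cong)
        fix x assume x: "x \<in> space ?PS"
        show "?h (merge W S (w, x)) = Jg Bs es us r w * (indicator A' x * ennreal (fS Bs vs r \<kappa> x))"
        proof -
          have w': "w \<in> space (PiM (Ws Bs) (\<lambda>_. bern p))" using w unfolding W_def .
          have x': "x \<in> space (PiM (SVs Bs) (\<lambda>_. bern p))" using x unfolding S_def .
          show ?thesis
            using key[where A=A' and \<kappa>=\<kappa>, OF bar esA usA vsA r w' x'] unfolding Q_def I_def W_def S_def .
        qed
      qed
      also have "\<dots> = Jg Bs es us r w * ?K A'"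
        by (rule nn_integral_cmult) (use A' fmeas in measurable)
      finally show ?thesis .
    qed
    have "emeasure ?D (Q A') = (\<integral>\<^sup>+y. ?h y \<partial>?Me)"
      unfolding D by (rule PMc.emeasure_pair_measure_alt[OF QinP])
    also have "\<dots> = (\<integral>\<^sup>+y. ?h y \<partial>distr (?PW \<Otimes>\<^sub>M ?PS) ?Me (merge W S))" unfolding Me_eq ..
    also have "\<dots> = (\<integral>\<^sup>+z. ?h (merge W S z) \<partial>(?PW \<Otimes>\<^sub>M ?PS))"
      by (rule nn_integral_distr[OF mmerge]) (use hm in simp)
    also have "\<dots> = (\<integral>\<^sup>+w. \<integral>\<^sup>+x. ?h (merge W S (w, x)) \<partial>?PS \<partial>?PW)"
      by (rule PPS.nn_integral_fst[symmetric, OF hmm])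
    also have "\<dots> = (\<integral>\<^sup>+w. Jg Bs es us r w * ?K A' \<partial>?PW)"
      by (rule nn_integral_cong) (simp add: inner)
    finally have e: "emeasure ?D (Q A') = (\<integral>\<^sup>+w. Jg Bs es us r w * ?K A' \<partial>?PW)" .
    have "(\<lambda>w. \<integral>\<^sup>+x. ?h (merge W S (w, x)) \<partial>?PS) \<in> borel_measurable ?PW"
      by (rule PPS.borel_measurable_nn_integral_fst[OF hmm])
    then have "(\<lambda>w. Jg Bs es us r w * ?K A') \<in> borel_measurable ?PW"
      by (rule measurable_cong[THEN iffD1, rotated]) (simp add: inner)
    with e show ?thesis by simp
  qed
  have QI: "Q (space ?PS) = I"
  proof -
    have "I \<subseteq> space ?D" unfolding I_def Iset_def by auto
    moreover have "\<And>\<omega>. \<omega> \<in> space ?D \<Longrightarrow> restrict (Ystate \<omega>) S \<in> space ?PS"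
      using measurable_space[OF Ym] by blast
    ultimately show ?thesis unfolding Q_def by auto
  qed
  have KI: "?K (space ?PS) = (\<integral>\<^sup>+x. ennreal (fS Bs vs r \<kappa> x) \<partial>?PS)"
    by (rule nn_integral_cong) simp
  have rb: "0 \<le> fS Bs vs r \<kappa> x \<and> fS Bs vs r \<kappa> x \<le> 1" for x
    unfolding fS_def using rho_bounds[OF r] by (simp add: power_le_one)
  have intf: "integrable ?PS (fS Bs vs r \<kappa>)"
    by (rule PPS.integrable_const_bound[where B=1]) (use rb fmeas in auto)
  have intAf: "integrable ?PS (\<lambda>x. indicator A x * fS Bs vs r \<kappa> x)"
  proof (rule PPS.integrable_const_bound[where B=1])
    show "AE x in ?PS. norm (indicator A x * fS Bs vs r \<kappa> x) \<le> 1"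
      by (rule AE_I2) (use rb in \<open>auto simp: indicator_def\<close>)
    show "(\<lambda>x. indicator A x * fS Bs vs r \<kappa> x) \<in> borel_measurable ?PS"
      using fmeas AS by measurable
  qed
  have K1: "(\<integral>\<^sup>+x. ennreal (fS Bs vs r \<kappa> x) \<partial>?PS) = ennreal (\<integral>x. fS Bs vs r \<kappa> x \<partial>?PS)"
    by (rule nn_integral_eq_integral[OF intf]) (use rb in auto)
  have K2: "?K A = ennreal (\<integral>x. indicator A x * fS Bs vs r \<kappa> x \<partial>?PS)"
  proof -
    have "?K A = (\<integral>\<^sup>+x. ennreal (indicator A x * fS Bs vs r \<kappa> x) \<partial>?PS)"
      by (rule nn_integral_cong) (simp add: indicator_def)
    also have "\<dots> = ennreal (\<integral>x. indicator A x * fS Bs vs r \<kappa> x \<partial>?PS)"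
      by (rule nn_integral_eq_integral[OF intAf]) (use rb in \<open>auto simp: indicator_def\<close>)
    finally show ?thesis .
  qed
  let ?mA = "measure ?PS A"
  have harris: "?mA * (\<integral>x. fS Bs vs r \<kappa> x \<partial>?PS) \<le> (\<integral>x. indicator A x * fS Bs vs r \<kappa> x \<partial>?PS)"
    using fS_harris(2)[OF p r A] unfolding S_def .
  have hK: "ennreal ?mA * ?K (space ?PS) \<le> ?K A"
  proof -
    have "ennreal ?mA * ?K (space ?PS) = ennreal (?mA * (\<integral>x. fS Bs vs r \<kappa> x \<partial>?PS))"
    proof -
      have ip: "0 \<le> (\<integral>x. fS Bs vs r \<kappa> x \<partial>?PS)"
        by (rule Bochner_Integration.integral_nonneg) (use rb in auto)
      show ?thesis unfolding KI K1 by (rule ennreal_mult[symmetric]) (simp_all add: ip)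
    qed
    also have "\<dots> \<le> ?K A" unfolding K2 using harris by (rule ennreal_leI)
    finally show ?thesis .
  qed
  have spPS: "space ?PS \<in> sets ?PS" by (rule sets.top)
  have ineq: "ennreal ?mA * emeasure ?D I \<le> emeasure ?D (Q A)"
  proof -
    have "ennreal ?mA * emeasure ?D I = ennreal ?mA * (\<integral>\<^sup>+w. Jg Bs es us r w * ?K (space ?PS) \<partial>?PW)"
      using main[OF spPS] unfolding QI by simp
    also have "\<dots> = (\<integral>\<^sup>+w. ennreal ?mA * (Jg Bs es us r w * ?K (space ?PS)) \<partial>?PW)"
      using main[OF spPS] by (intro nn_integral_cmult[symmetric]) auto
    also have "\<dots> \<le> (\<integral>\<^sup>+w. Jg Bs es us r w * ?K A \<partial>?PW)"
    proof (rule nn_integral_mono)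
      fix w
      have "ennreal ?mA * (Jg Bs es us r w * ?K (space ?PS)) = Jg Bs es us r w * (ennreal ?mA * ?K (space ?PS))"
        by (simp add: ac_simps)
      also have "\<dots> \<le> Jg Bs es us r w * ?K A" by (rule mult_left_mono[OF hK]) simp
      finally show "ennreal ?mA * (Jg Bs es us r w * ?K (space ?PS)) \<le> Jg Bs es us r w * ?K A" .
    qed
    also have "\<dots> = emeasure ?D (Q A)" using main[OF AS] by simp
    finally show ?thesis .
  qed
  interpret PDD: prob_space ?D unfolding D by (rule PD.P.prob_space_axioms)
  have mIpos: "measure ?D I > 0" using pos unfolding I_def .
  have ineq': "?mA * measure ?D I \<le> measure ?D (Q A)"
    using ineq unfolding PDD.emeasure_eq_measure by (simp add: ennreal_mult[symmetric])
  let ?f = "\<lambda>\<omega>. restrict (Ystate \<omega>) S"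
  have fmu: "?f \<in> measurable (uniform_measure ?D I) ?PS"
    using Ym by (simp cong: measurable_cong_sets)
  have Bset: "?f -` A \<inter> space ?D \<in> sets ?D" using measurable_sets[OF Ym AS] .
  have QA: "I \<inter> (?f -` A \<inter> space ?D) = Q A" unfolding Q_def by auto
  have "measure (distr (uniform_measure ?D I) ?PS ?f) A = measure (uniform_measure ?D I) (?f -` A \<inter> space ?D)"
    using measure_distr[OF fmu AS] by simp
  also have "\<dots> = measure ?D (Q A) / measure ?D I"
    using measure_uniform_measure[of ?D I, OF _ _ Bset] mIpos QA
    by (simp add: PDD.emeasure_eq_measure)
  finally have mu: "measure (distr (uniform_measure ?D I) ?PS ?f) A = measure ?D (Q A) / measure ?D I" .
  have "?mA \<le> measure ?D (Q A) / measure ?D I"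
    using ineq' mIpos by (simp add: pos_le_divide_eq)
  then show ?thesis using mu unfolding I_def S_def by simp
qed

theorem mainTheorem8:
  fixes p r :: real and Bs :: "edge set list"
    and es :: "(edge \<times> bool) list" and us :: "(vertex \<times> bool) list"
    and vs :: "vertex list" and \<kappa> :: bool
  defines "U \<equiv> \<Union> (intB ` set Bs)"
    and "V \<equiv> \<Inter> (extB ` set Bs)"
    and "I \<equiv> {\<omega> \<in> space (DaC p r).
              (\<forall>B\<in>set Bs. \<forall>e\<in>B. \<not> Ystate \<omega> e) \<and>
              (\<forall>(e, s)\<in>set es. Ystate \<omega> e = s) \<and>
              (\<forall>(u, c)\<in>set us. Xcol \<omega> u = c) \<and>
              (\<forall>v\<in>set vs. Xcol \<omega> v = \<kappa>)}"
    and "SV \<equiv> {e \<in> E2. fst e \<in> \<Inter> (extB ` set Bs) \<and> snd e \<in> \<Inter> (extB ` set Bs) \<and> e \<notin> \<Union> (set Bs)}"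
  assumes "0 \<le> p" "p \<le> 1" "0 \<le> r" "r \<le> 1"
    and "\<forall>B\<in>set Bs. barrier B"
    and "\<forall>(e, s)\<in>set es. e \<in> E2 \<and> fst e \<in> U \<and> snd e \<in> U \<and> e \<notin> \<Union> (set Bs)"
    and "\<forall>(u, c)\<in>set us. u \<in> U"
    and "\<forall>v\<in>set vs. v \<in> V"
    and "measure (DaC p r) I > 0"
  shows "stoch_dom SV
           (distr (uniform_measure (DaC p r) I) (nu p SV) (\<lambda>\<omega>. restrict (Ystate \<omega>) SV))
           (nu p SV)"
proof -
  have SVe: "SV = SVs Bs" unfolding SV_def SVs_def ..
  have Ie: "I = Iset Bs es us vs \<kappa> p r" unfolding I_def Iset_def ..
  have vsA: "\<forall>v\<in>set vs. v \<in> Vs Bs" using assms(12) unfolding V_def Vs_def .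
  have esA: "\<forall>(e, s)\<in>set es. e \<in> E2 \<and> fst e \<in> \<Union> (intB ` set Bs) \<and> snd e \<in> \<Union> (intB ` set Bs) \<and> e \<notin> \<Union> (set Bs)"
    using assms(10) unfolding U_def .
  have usA: "\<forall>(u, c)\<in>set us. u \<in> \<Union> (intB ` set Bs)" using assms(11) unfolding U_def .
  have pos: "measure (DaC p r) (Iset Bs es us vs \<kappa> p r) > 0" using assms(13) unfolding Ie .
  show ?thesis unfolding stoch_dom_def
  proof (intro ballI impI)
    fix A assume A1: "A \<in> sets (PiM SV (\<lambda>_. count_space (UNIV :: bool set)))" and A2: "increasing_event SV A"
    have "sets (PiM SV (\<lambda>_. count_space (UNIV :: bool set))) = sets (PiM (SVs Bs) (\<lambda>_. bern p))"
      unfolding SVe by (rule sets_PiM_cong) auto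
    with A1 have A1': "A \<in> sets (PiM (SVs Bs) (\<lambda>_. bern p))" by simp
    have A2': "increasing_event (SVs Bs) A" using A2 unfolding SVe .
    show "measure (nu p SV) A \<le> measure (distr (uniform_measure (DaC p r) I) (nu p SV) (\<lambda>\<omega>. restrict (Ystate \<omega>) SV)) A"
      unfolding nu_def SVe Ie
      by (rule main_core[OF assms(5-9) esA usA vsA pos A1' A2'])
  qed
qed

end
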